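(* Let $C_0$ be any quantum circuit with gates $G_1,\dots,G_m$, let $H_1,\dots,H_m$ be unitaries (each of the same dimension as the corresponding $G_i$) drawn independently from the Haar measure, and let $C(\theta)$, $\theta\in[0,1]$, be the circuit obtained from $C_0$ by replacing each gate $G_i$ with $H_i(\theta)G_i$, where $H_i(\theta)$ is the Cayley transform of $H_i$. Let $\mathcal N$ be any fixed noise model. Then $p_0(C(\theta),\mathcal N)$ is a rational function in $\theta$ whose numerator and denominator have degree $O(m)$.
   Context: Cayley transform: for a unitary $H=\sum_j e^{i\varphi_j}|\psi_j\rangle\langle\psi_j|$ with $\varphi_j\in[-\pi,\pi]$, $H(\theta)=(\theta I+(2-\theta)H)((2-\theta)I+\theta H)^{-1}=\sum_j\frac{1+i(1-\theta)\tan(\varphi_j/2)}{1-i(1-\theta)\tan(\varphi_j/2)}|\psi_j\rangle\langle\psi_j|$, so $H(0)=H$ and $H(1)=I$. A noise model $\mathcal N$ consists of $O(m)$ noise channels placed in the circuit, each acting on a constant number of qubits, of the form $(1-\gamma)\mathcal I+\gamma\mathcal E_k$ with $\mathcal E_k$ an arbitrary CPTP map, fixed independently of the gates. For an $n$-qubit circuit $C$, $p_0(C,\mathcal N)=\mathrm{Tr}[|0^n\rangle\langle 0^n|\,\mathcal C_{\mathcal N}(|0^n\rangle\langle 0^n|)]$, where $\mathcal C_{\mathcal N}$ is the channel obtained by applying the noise model to $C$. *)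

theory Defs
  imports "Jordan_Normal_Form.Determinant" "HOL-Computational_Algebra.Polynomial"
begin

definition adjoint :: "complex mat \<Rightarrow> complex mat" where
  "adjoint A = mat (dim_col A) (dim_row A) (\<lambda>(i,j). cnj (A $$ (j,i)))"

definition unitary :: "nat \<Rightarrow> complex mat \<Rightarrow> bool" where
  "unitary d U \<longleftrightarrow> U \<in> carrier_mat d d \<and> U * adjoint U = 1\<^sub>m d \<and> adjoint U * U = 1\<^sub>m d"

definition mtrace :: "complex mat \<Rightarrow> complex" where
  "mtrace A = (\<Sum>i<dim_row A. A $$ (i,i))"

definition minv :: "complex mat \<Rightarrow> complex mat" where
  "minv A = (1 / det A) \<cdot>\<^sub>m adj_mat A"

definition cayley :: "real \<Rightarrow> complex mat \<Rightarrow> complex mat" where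
  "cayley \<theta> H = (let d = dim_row H; t = complex_of_real \<theta> in
     (t \<cdot>\<^sub>m 1\<^sub>m d + (2 - t) \<cdot>\<^sub>m H) * minv ((2 - t) \<cdot>\<^sub>m 1\<^sub>m d + t \<cdot>\<^sub>m H))"

text \<open>Qubit bookkeeping: basis index i < 2^n of n qubits; bit q of i is the value of qubit q.\<close>
definition qbit :: "nat \<Rightarrow> nat \<Rightarrow> nat" where
  "qbit i q = (i div 2 ^ q) mod 2"

text \<open>Index of the restriction of basis state i to the qubit list qs (qs!j is the j-th local qubit).\<close>
definition sub_index :: "nat list \<Rightarrow> nat \<Rightarrow> nat" where
  "sub_index qs i = (\<Sum>j<length qs. qbit i (qs ! j) * 2 ^ j)"

definition agree_outside :: "nat \<Rightarrow> nat list \<Rightarrow> nat \<Rightarrow> nat \<Rightarrow> bool" where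
  "agree_outside n qs i j \<longleftrightarrow> (\<forall>q<n. q \<notin> set qs \<longrightarrow> qbit i q = qbit j q)"

text \<open>Embedding of an operator on the qubits qs into the n-qubit space (U tensor identity).\<close>
definition embed :: "nat \<Rightarrow> nat list \<Rightarrow> complex mat \<Rightarrow> complex mat" where
  "embed n qs U = mat (2 ^ n) (2 ^ n)
     (\<lambda>(i,j). if agree_outside n qs i j then U $$ (sub_index qs i, sub_index qs j) else 0)"

definition valid_qubits :: "nat \<Rightarrow> nat list \<Rightarrow> bool" where
  "valid_qubits n qs \<longleftrightarrow> distinct qs \<and> (\<forall>q\<in>set qs. q < n)"

text \<open>A gate: a list of target qubits together with a unitary on them.\<close>
type_synonym gate = "nat list \<times> complex mat"

definition valid_gate :: "nat \<Rightarrow> gate \<Rightarrow> bool" where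
  "valid_gate n g \<longleftrightarrow> valid_qubits n (fst g) \<and> unitary (2 ^ length (fst g)) (snd g)"

text \<open>A noise channel (1-gamma) Id + gamma E, with E an arbitrary CPTP map on the qubits qs,
  given by a Kraus representation Ks (sum of K^dagger K = I).\<close>
type_synonym channel = "nat list \<times> complex mat list"

definition valid_channel :: "nat \<Rightarrow> channel \<Rightarrow> bool" where
  "valid_channel n ch \<longleftrightarrow> (let qs = fst ch; Ks = snd ch; d = 2 ^ length qs in
     valid_qubits n qs \<and> (\<forall>K\<in>set Ks. K \<in> carrier_mat d d) \<and>
     (\<forall>i<d. \<forall>j<d. (\<Sum>K\<leftarrow>Ks. (adjoint K * K) $$ (i,j)) = (if i = j then 1 else 0)))"

definition apply_channel :: "nat \<Rightarrow> real \<Rightarrow> channel \<Rightarrow> complex mat \<Rightarrow> complex mat" where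
  "apply_channel n \<gamma> ch \<rho> =
     complex_of_real (1 - \<gamma>) \<cdot>\<^sub>m \<rho> +
     complex_of_real \<gamma> \<cdot>\<^sub>m foldr (\<lambda>K acc. embed n (fst ch) K * \<rho> * adjoint (embed n (fst ch) K) + acc)
                           (snd ch) (0\<^sub>m (2 ^ n) (2 ^ n))"

definition apply_layer :: "nat \<Rightarrow> real \<Rightarrow> channel list \<Rightarrow> complex mat \<Rightarrow> complex mat" where
  "apply_layer n \<gamma> L \<rho> = fold (apply_channel n \<gamma>) L \<rho>"

definition apply_unitary :: "nat \<Rightarrow> nat list \<Rightarrow> complex mat \<Rightarrow> complex mat \<Rightarrow> complex mat" where
  "apply_unitary n qs U \<rho> = embed n qs U * \<rho> * adjoint (embed n qs U)"

text \<open>A noise model for an m-gate circuit: N ! 0 is applied before the first gate and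
  N ! (i+1) right after gate i+1 (1-based), i.e. N has length m+1.\<close>
definition valid_noise_model :: "nat \<Rightarrow> nat \<Rightarrow> real \<Rightarrow> channel list list \<Rightarrow> bool" where
  "valid_noise_model n m \<gamma> N \<longleftrightarrow> 0 \<le> \<gamma> \<and> \<gamma> \<le> 1 \<and> length N = Suc m \<and>
     (\<forall>L\<in>set N. \<forall>ch\<in>set L. valid_channel n ch)"

definition proj0 :: "nat \<Rightarrow> complex mat" where
  "proj0 n = mat (2 ^ n) (2 ^ n) (\<lambda>(i,j). if i = 0 \<and> j = 0 then 1 else 0)"

definition circuit_theta :: "gate list \<Rightarrow> complex mat list \<Rightarrow> real \<Rightarrow> gate list" where
  "circuit_theta gs Hs \<theta> = map (\<lambda>i. (fst (gs ! i), cayley \<theta> (Hs ! i) * snd (gs ! i))) [0..<length gs]"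

definition noisy_output :: "nat \<Rightarrow> gate list \<Rightarrow> real \<Rightarrow> channel list list \<Rightarrow> complex mat" where
  "noisy_output n C \<gamma> N =
     fold (\<lambda>i \<rho>. apply_layer n \<gamma> (N ! Suc i) (apply_unitary n (fst (C ! i)) (snd (C ! i)) \<rho>))
          [0..<length C] (apply_layer n \<gamma> (N ! 0) (proj0 n))"

definition p0 :: "nat \<Rightarrow> gate list \<Rightarrow> real \<Rightarrow> channel list list \<Rightarrow> complex" where
  "p0 n C \<gamma> N = mtrace (proj0 n * noisy_output n C \<gamma> N)"

end

theory Submission
  imports Defs
begin


definition pd :: "nat \<Rightarrow> complex poly \<Rightarrow> (real \<Rightarrow> complex) \<Rightarrow> bool" where
 "pd D S f \<longleftrightarrow> (\<exists>p. degree p \<le> D \<and> (\<forall>\<theta>\<in>{0..1}. poly S (of_real \<theta>) * f \<theta> = poly p (of_real \<theta>)))"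

lemma pd_add: "pd D S f \<Longrightarrow> pd D S g \<Longrightarrow> pd D S (\<lambda>\<theta>. f \<theta> + g \<theta>)"
  unfolding pd_def
  by (metis (no_types, lifting) degree_add_le distrib_left poly_add)

lemma pd_mult: "pd D1 S1 f \<Longrightarrow> pd D2 S2 g \<Longrightarrow> pd (D1+D2) (S1*S2) (\<lambda>\<theta>. f \<theta> * g \<theta>)"
  unfolding pd_def
proof (elim exE conjE)
  fix p q assume "degree p \<le> D1" "\<forall>\<theta>\<in>{0..1}. poly S1 (of_real \<theta>) * f \<theta> = poly p (of_real \<theta>)"
     "degree q \<le> D2" "\<forall>\<theta>\<in>{0..1}. poly S2 (of_real \<theta>) * g \<theta> = poly q (of_real \<theta>)"
  thus "\<exists>pa. degree pa \<le> D1 + D2 \<and> (\<forall>\<theta>\<in>{0..1}. poly (S1 * S2) (complex_of_real \<theta>) * (f \<theta> * g \<theta>) = poly pa (complex_of_real \<theta>))"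
    by (intro exI[of _ "p*q"]) (auto intro: order.trans[OF degree_mult_le] simp: algebra_simps add_mono)
qed

lemma pd_const: "pd 0 1 (\<lambda>_. c)"
  unfolding pd_def by (intro exI[of _ "[:c:]"]) auto

lemma pd_zero: "pd D S (\<lambda>_. 0)"
  unfolding pd_def by (intro exI[of _ 0]) auto

lemma pd_id: "pd 1 1 (\<lambda>\<theta>. complex_of_real \<theta>)"
  unfolding pd_def by (intro exI[of _ "[:0,1:]"]) auto

lemma pd_mono: "pd D S f \<Longrightarrow> D \<le> D' \<Longrightarrow> pd D' S f"
  unfolding pd_def by (meson order.trans)

lemma pd_cong: "pd D S f \<Longrightarrow> (\<And>\<theta>. \<theta>\<in>{0..1} \<Longrightarrow> f \<theta> = g \<theta>) \<Longrightarrow> pd D S g"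
  unfolding pd_def by auto

lemma pd_scale: "pd D S f \<Longrightarrow> pd D S (\<lambda>\<theta>. c * f \<theta>)"
  using pd_mult[OF pd_const, of D S f c] by simp

lemma poly_cnj_of_real: "poly (map_poly cnj p) (complex_of_real x) = cnj (poly p (complex_of_real x))"
  using poly_cnj[of p "complex_of_real x"] by simp

lemma pd_cnj: "pd D S f \<Longrightarrow> pd D (map_poly cnj S) (\<lambda>\<theta>. cnj (f \<theta>))"
  unfolding pd_def
proof (elim exE conjE)
  fix p assume p: "degree p \<le> D" "\<forall>\<theta>\<in>{0..1}. poly S (of_real \<theta>) * f \<theta> = poly p (of_real \<theta>)"
  have "poly (map_poly cnj S) (complex_of_real \<theta>) * cnj (f \<theta>) = poly (map_poly cnj p) (complex_of_real \<theta>)"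
    if "\<theta>\<in>{0..1}" for \<theta>
  proof -
    have "poly (map_poly cnj S) (complex_of_real \<theta>) * cnj (f \<theta>) = cnj (poly S (of_real \<theta>) * f \<theta>)"
      unfolding poly_cnj_of_real complex_cnj_mult ..
    also have "\<dots> = cnj (poly p (of_real \<theta>))" using p(2) that by simp
    finally show ?thesis unfolding poly_cnj_of_real .
  qed
  moreover have "degree (map_poly cnj p) \<le> D" using p(1) map_poly_degree_leq[of cnj p] by linarith
  ultimately show "\<exists>pa. degree pa \<le> D \<and> (\<forall>\<theta>\<in>{0..1}. poly (map_poly cnj S) (complex_of_real \<theta>) * cnj (f \<theta>) = poly pa (complex_of_real \<theta>))"
    by blast
qed

lemma pd_sum: "finite I \<Longrightarrow> (\<And>i. i\<in>I \<Longrightarrow> pd D S (f i)) \<Longrightarrow> pd D S (\<lambda>\<theta>. \<Sum>i\<in>I. f i \<theta>)"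
proof (induction I rule: finite_induct)
  case empty
  then show ?case using pd_zero[of D S] by simp
next
  case (insert x F)
  have "pd D S (\<lambda>\<theta>. f x \<theta> + (\<Sum>i\<in>F. f i \<theta>))"
    by (rule pd_add) (use insert in auto)
  then show ?case using insert by simp
qed

lemma pd_prod: "finite I \<Longrightarrow> (\<And>i. i\<in>I \<Longrightarrow> pd D 1 (f i)) \<Longrightarrow> pd (card I * D) 1 (\<lambda>\<theta>. \<Prod>i\<in>I. f i \<theta>)"
proof (induction I rule: finite_induct)
  case empty
  then show ?case using pd_const[of 1] by simp
next
  case (insert x F)
  have "pd (D + card F * D) (1*1) (\<lambda>\<theta>. f x \<theta> * (\<Prod>i\<in>F. f i \<theta>))"
    by (rule pd_mult) (use insert in auto)
  then show ?case using insert by simp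
qed

lemma pd_inv: "(\<And>\<theta>. \<theta>\<in>{0..1} \<Longrightarrow> f \<theta> = poly p (of_real \<theta>) \<and> poly p (of_real \<theta>) \<noteq> 0) \<Longrightarrow> pd 0 p (\<lambda>\<theta>. 1 / f \<theta>)"
  unfolding pd_def by (intro exI[of _ "[:1:]"]) auto

definition pdm :: "nat \<Rightarrow> complex poly \<Rightarrow> nat \<Rightarrow> (real \<Rightarrow> complex mat) \<Rightarrow> bool" where
 "pdm D S r A \<longleftrightarrow> (\<forall>\<theta>\<in>{0..1}. A \<theta> \<in> carrier_mat r r) \<and> (\<forall>i<r. \<forall>j<r. pd D S (\<lambda>\<theta>. A \<theta> $$ (i,j)))"

lemma pdm_carrier: "pdm D S r A \<Longrightarrow> \<theta>\<in>{0..1} \<Longrightarrow> A \<theta> \<in> carrier_mat r r"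
  unfolding pdm_def by blast

lemma pdm_entry: "pdm D S r A \<Longrightarrow> i < r \<Longrightarrow> j < r \<Longrightarrow> pd D S (\<lambda>\<theta>. A \<theta> $$ (i,j))"
  unfolding pdm_def by blast

lemma pdm_mono: "pdm D S r A \<Longrightarrow> D \<le> D' \<Longrightarrow> pdm D' S r A"
  unfolding pdm_def using pd_mono by blast

lemma pdm_cong: "pdm D S r A \<Longrightarrow> (\<And>\<theta>. \<theta>\<in>{0..1} \<Longrightarrow> A \<theta> = B \<theta>) \<Longrightarrow> pdm D S r B"
  unfolding pdm_def
proof (intro conjI allI impI ballI)
  fix \<theta> :: real assume "(\<forall>\<theta>\<in>{0..1}. A \<theta> \<in> carrier_mat r r) \<and> (\<forall>i<r. \<forall>j<r. pd D S (\<lambda>\<theta>. A \<theta> $$ (i, j)))"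
    "\<And>\<theta>. \<theta> \<in> {0..1} \<Longrightarrow> A \<theta> = B \<theta>" "\<theta> \<in> {0..1}"
  then show "B \<theta> \<in> carrier_mat r r" by metis
next
  fix i j assume a: "(\<forall>\<theta>\<in>{0..1}. A \<theta> \<in> carrier_mat r r) \<and> (\<forall>i<r. \<forall>j<r. pd D S (\<lambda>\<theta>. A \<theta> $$ (i, j)))"
    "\<And>\<theta>. \<theta> \<in> {0..1} \<Longrightarrow> A \<theta> = B \<theta>" "i < r" "j < r"
  show "pd D S (\<lambda>\<theta>. B \<theta> $$ (i, j))"
    by (rule pd_cong[of D S "\<lambda>\<theta>. A \<theta> $$ (i, j)"]) (use a in auto)
qed

lemma pdm_const: "A \<in> carrier_mat r r \<Longrightarrow> pdm 0 1 r (\<lambda>_. A)"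
  unfolding pdm_def using pd_const by blast

lemma pdm_zero: "pdm D S r (\<lambda>_. 0\<^sub>m r r)"
  unfolding pdm_def using pd_zero by auto

lemma pdm_add: "pdm D S r A \<Longrightarrow> pdm D S r B \<Longrightarrow> pdm D S r (\<lambda>\<theta>. A \<theta> + B \<theta>)"
  unfolding pdm_def
proof (intro conjI allI impI ballI)
  fix \<theta> :: real assume "(\<forall>\<theta>\<in>{0..1}. A \<theta> \<in> carrier_mat r r) \<and> (\<forall>i<r. \<forall>j<r. pd D S (\<lambda>\<theta>. A \<theta> $$ (i, j)))"
    "(\<forall>\<theta>\<in>{0..1}. B \<theta> \<in> carrier_mat r r) \<and> (\<forall>i<r. \<forall>j<r. pd D S (\<lambda>\<theta>. B \<theta> $$ (i, j)))" "\<theta> \<in> {0..1}"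
  then show "A \<theta> + B \<theta> \<in> carrier_mat r r" by auto
next
  fix i j assume a: "(\<forall>\<theta>\<in>{0..1}. A \<theta> \<in> carrier_mat r r) \<and> (\<forall>i<r. \<forall>j<r. pd D S (\<lambda>\<theta>. A \<theta> $$ (i, j)))"
    "(\<forall>\<theta>\<in>{0..1}. B \<theta> \<in> carrier_mat r r) \<and> (\<forall>i<r. \<forall>j<r. pd D S (\<lambda>\<theta>. B \<theta> $$ (i, j)))" "i < r" "j < r"
  have "pd D S (\<lambda>\<theta>. A \<theta> $$ (i, j) + B \<theta> $$ (i, j))" by (rule pd_add) (use a in auto)
  then show "pd D S (\<lambda>\<theta>. (A \<theta> + B \<theta>) $$ (i, j))"
  proof (rule pd_cong)
    fix \<theta> :: real assume "\<theta> \<in> {0..1}"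
    then have "A \<theta> \<in> carrier_mat r r" "B \<theta> \<in> carrier_mat r r" using a by blast+
    then show "A \<theta> $$ (i, j) + B \<theta> $$ (i, j) = (A \<theta> + B \<theta>) $$ (i, j)" using a by auto
  qed
qed

lemma pdm_smult: "pd D1 S1 c \<Longrightarrow> pdm D2 S2 r A \<Longrightarrow> pdm (D1+D2) (S1*S2) r (\<lambda>\<theta>. c \<theta> \<cdot>\<^sub>m A \<theta>)"
  unfolding pdm_def
proof (intro conjI allI impI ballI)
  fix \<theta> :: real assume "(\<forall>\<theta>\<in>{0..1}. A \<theta> \<in> carrier_mat r r) \<and> (\<forall>i<r. \<forall>j<r. pd D2 S2 (\<lambda>\<theta>. A \<theta> $$ (i, j)))"
    "\<theta> \<in> {0..1}"
  then have "A \<theta> \<in> carrier_mat r r" by blast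
  then show "c \<theta> \<cdot>\<^sub>m A \<theta> \<in> carrier_mat r r" by auto
next
  fix i j assume a: "pd D1 S1 c" "(\<forall>\<theta>\<in>{0..1}. A \<theta> \<in> carrier_mat r r) \<and> (\<forall>i<r. \<forall>j<r. pd D2 S2 (\<lambda>\<theta>. A \<theta> $$ (i, j)))"
    "i < r" "j < r"
  have "pd (D1+D2) (S1*S2) (\<lambda>\<theta>. c \<theta> * A \<theta> $$ (i, j))" by (rule pd_mult) (use a in auto)
  then show "pd (D1+D2) (S1*S2) (\<lambda>\<theta>. (c \<theta> \<cdot>\<^sub>m A \<theta>) $$ (i, j))"
  proof (rule pd_cong)
    fix \<theta> :: real assume "\<theta> \<in> {0..1}"
    then have "A \<theta> \<in> carrier_mat r r" using a by blast
    then show "c \<theta> * A \<theta> $$ (i, j) = (c \<theta> \<cdot>\<^sub>m A \<theta>) $$ (i, j)" using a by auto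
  qed
qed

lemma pdm_mult: "pdm D1 S1 r A \<Longrightarrow> pdm D2 S2 r B \<Longrightarrow> pdm (D1+D2) (S1*S2) r (\<lambda>\<theta>. A \<theta> * B \<theta>)"
  unfolding pdm_def
proof (intro conjI allI impI ballI)
  fix \<theta> :: real assume "(\<forall>\<theta>\<in>{0..1}. A \<theta> \<in> carrier_mat r r) \<and> (\<forall>i<r. \<forall>j<r. pd D1 S1 (\<lambda>\<theta>. A \<theta> $$ (i, j)))"
    "(\<forall>\<theta>\<in>{0..1}. B \<theta> \<in> carrier_mat r r) \<and> (\<forall>i<r. \<forall>j<r. pd D2 S2 (\<lambda>\<theta>. B \<theta> $$ (i, j)))" "\<theta> \<in> {0..1}"
  then have "A \<theta> \<in> carrier_mat r r" "B \<theta> \<in> carrier_mat r r" by blast+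
  then show "A \<theta> * B \<theta> \<in> carrier_mat r r" by auto
next
  fix i j assume a: "(\<forall>\<theta>\<in>{0..1}. A \<theta> \<in> carrier_mat r r) \<and> (\<forall>i<r. \<forall>j<r. pd D1 S1 (\<lambda>\<theta>. A \<theta> $$ (i, j)))"
    "(\<forall>\<theta>\<in>{0..1}. B \<theta> \<in> carrier_mat r r) \<and> (\<forall>i<r. \<forall>j<r. pd D2 S2 (\<lambda>\<theta>. B \<theta> $$ (i, j)))" "i < r" "j < r"
  have "pd (D1+D2) (S1*S2) (\<lambda>\<theta>. \<Sum>k\<in>{0..<r}. A \<theta> $$ (i, k) * B \<theta> $$ (k, j))"
    by (rule pd_sum, simp, rule pd_mult) (use a in auto)
  then show "pd (D1+D2) (S1*S2) (\<lambda>\<theta>. (A \<theta> * B \<theta>) $$ (i, j))"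
  proof (rule pd_cong)
    fix \<theta> :: real assume "\<theta> \<in> {0..1}"
    then have "A \<theta> \<in> carrier_mat r r" "B \<theta> \<in> carrier_mat r r" using a by auto
    then show "(\<Sum>k\<in>{0..<r}. A \<theta> $$ (i, k) * B \<theta> $$ (k, j)) = (A \<theta> * B \<theta>) $$ (i, j)"
      using a(3,4) by (auto simp: scalar_prod_def intro: sum.cong)
  qed
qed

lemma pdm_adjoint: "pdm D S r A \<Longrightarrow> pdm D (map_poly cnj S) r (\<lambda>\<theta>. adjoint (A \<theta>))"
  unfolding pdm_def
proof (intro conjI allI impI ballI)
  fix \<theta> :: real assume "(\<forall>\<theta>\<in>{0..1}. A \<theta> \<in> carrier_mat r r) \<and> (\<forall>i<r. \<forall>j<r. pd D S (\<lambda>\<theta>. A \<theta> $$ (i, j)))"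
    "\<theta> \<in> {0..1}"
  then have "A \<theta> \<in> carrier_mat r r" by blast
  then show "adjoint (A \<theta>) \<in> carrier_mat r r" by (auto simp: adjoint_def)
next
  fix i j assume a: "(\<forall>\<theta>\<in>{0..1}. A \<theta> \<in> carrier_mat r r) \<and> (\<forall>i<r. \<forall>j<r. pd D S (\<lambda>\<theta>. A \<theta> $$ (i, j)))"
    "i < r" "j < r"
  have "pd D (map_poly cnj S) (\<lambda>\<theta>. cnj (A \<theta> $$ (j, i)))" by (rule pd_cnj) (use a in auto)
  then show "pd D (map_poly cnj S) (\<lambda>\<theta>. adjoint (A \<theta>) $$ (i, j))"
  proof (rule pd_cong)
    fix \<theta> :: real assume "\<theta> \<in> {0..1}"
    then have "A \<theta> \<in> carrier_mat r r" using a by blast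
    then show "cnj (A \<theta> $$ (j, i)) = adjoint (A \<theta>) $$ (i, j)" using a by (auto simp: adjoint_def)
  qed
qed

lemma qbit_le: "qbit i q \<le> 1"
  unfolding qbit_def by simp

lemma sub_index_less: "sub_index qs i < 2 ^ length qs"
proof -
  have "(\<Sum>j<m. qbit i (qs ! j) * 2 ^ j) < (2::nat) ^ m" for m
  proof (induction m)
    case 0 then show ?case by simp
  next
    case (Suc m)
    have h: "qbit i (qs ! m) * 2 ^ m \<le> (2::nat) ^ m" using qbit_le[of i "qs ! m"] by simp
    have "(\<Sum>j<Suc m. qbit i (qs ! j) * 2 ^ j) = (\<Sum>j<m. qbit i (qs ! j) * 2 ^ j) + qbit i (qs ! m) * 2 ^ m"
      by simp
    also have "\<dots> < 2 ^ m + 2 ^ m" using Suc.IH h by linarith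
    finally show ?case by simp
  qed
  then show ?thesis unfolding sub_index_def by blast
qed

lemma pdm_embed: "pdm D S (2 ^ length qs) U \<Longrightarrow> pdm D S (2 ^ n) (\<lambda>\<theta>. embed n qs (U \<theta>))"
  unfolding pdm_def
proof (intro conjI allI impI ballI)
  fix \<theta> :: real
  show "embed n qs (U \<theta>) \<in> carrier_mat (2 ^ n) (2 ^ n)" by (simp add: embed_def)
next
  fix i j :: nat assume a: "(\<forall>\<theta>\<in>{0..1}. U \<theta> \<in> carrier_mat (2 ^ length qs) (2 ^ length qs)) \<and>
      (\<forall>i<2 ^ length qs. \<forall>j<2 ^ length qs. pd D S (\<lambda>\<theta>. U \<theta> $$ (i, j)))"
    "i < 2 ^ n" "j < 2 ^ n"
  show "pd D S (\<lambda>\<theta>. embed n qs (U \<theta>) $$ (i, j))"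
  proof (cases "agree_outside n qs i j")
    case True
    have "pd D S (\<lambda>\<theta>. U \<theta> $$ (sub_index qs i, sub_index qs j))"
      using a(1) sub_index_less by blast
    then show ?thesis by (rule pd_cong) (use a True in \<open>auto simp: embed_def\<close>)
  next
    case False
    show ?thesis by (rule pd_cong[OF pd_zero]) (use a False in \<open>auto simp: embed_def\<close>)
  qed
qed

lemma pd_det: "pdm D 1 r A \<Longrightarrow> pd (r*D) 1 (\<lambda>\<theta>. det (A \<theta>))"
proof -
  assume a: "pdm D 1 r A"
  have "pd (r*D) 1 (\<lambda>\<theta>. \<Sum>p\<in>{p. p permutes {0..<r}}. signof p * (\<Prod>i = 0..<r. A \<theta> $$ (i, p i)))"
  proof (rule pd_sum)
    show "finite {p. p permutes {0..<r}}" by (simp add: finite_permutations)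
  next
    fix p assume p: "p \<in> {p. p permutes {0..<r}}"
    have "pd (card {0..<r} * D) 1 (\<lambda>\<theta>. \<Prod>i = 0..<r. A \<theta> $$ (i, p i))"
    proof (rule pd_prod)
      fix i assume "i \<in> {0..<r}"
      moreover then have "p i < r" using p permutes_in_image by fastforce
      ultimately show "pd D 1 (\<lambda>\<theta>. A \<theta> $$ (i, p i))" using pdm_entry[OF a] by auto
    qed simp
    then show "pd (r * D) 1 (\<lambda>\<theta>. signof p * (\<Prod>i = 0..<r. A \<theta> $$ (i, p i)))"
      by (intro pd_scale) simp
  qed
  then show ?thesis
  proof (rule pd_cong)
    fix \<theta> :: real assume "\<theta> \<in> {0..1}"
    then have "A \<theta> \<in> carrier_mat r r" using pdm_carrier[OF a] by blast
    then show "(\<Sum>p\<in>{p. p permutes {0..<r}}. signof p * (\<Prod>i = 0..<r. A \<theta> $$ (i, p i))) = det (A \<theta>)"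
      unfolding det_def by auto
  qed
qed

lemma pdm_delete: "pdm D 1 r A \<Longrightarrow> i < r \<Longrightarrow> j < r \<Longrightarrow> pdm D 1 (r - 1) (\<lambda>\<theta>. mat_delete (A \<theta>) i j)"
  unfolding pdm_def
proof (intro conjI allI impI ballI)
  fix \<theta> :: real assume "(\<forall>\<theta>\<in>{0..1}. A \<theta> \<in> carrier_mat r r) \<and> (\<forall>i<r. \<forall>j<r. pd D 1 (\<lambda>\<theta>. A \<theta> $$ (i, j)))"
    "\<theta> \<in> {0..1}"
  then have "A \<theta> \<in> carrier_mat r r" by blast
  then show "mat_delete (A \<theta>) i j \<in> carrier_mat (r - 1) (r - 1)" by (rule mat_delete_carrier)
next
  fix i' j' assume a: "(\<forall>\<theta>\<in>{0..1}. A \<theta> \<in> carrier_mat r r) \<and> (\<forall>i<r. \<forall>j<r. pd D 1 (\<lambda>\<theta>. A \<theta> $$ (i, j)))"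
    "i < r" "j < r" "i' < r - 1" "j' < r - 1"
  have "pd D 1 (\<lambda>\<theta>. A \<theta> $$ (if i' < i then i' else Suc i', if j' < j then j' else Suc j'))"
    using a by auto
  then show "pd D 1 (\<lambda>\<theta>. mat_delete (A \<theta>) i j $$ (i', j'))"
  proof (rule pd_cong)
    fix \<theta> :: real assume "\<theta> \<in> {0..1}"
    then have "A \<theta> \<in> carrier_mat r r" using a by blast
    then show "A \<theta> $$ (if i' < i then i' else Suc i', if j' < j then j' else Suc j') = mat_delete (A \<theta>) i j $$ (i', j')"
      using a by (auto simp: mat_delete_def)
  qed
qed

lemma pdm_adj: "pdm D 1 r A \<Longrightarrow> pdm ((r - 1) * D) 1 r (\<lambda>\<theta>. adj_mat (A \<theta>))"
  unfolding pdm_def[of _ _ _ "\<lambda>\<theta>. adj_mat (A \<theta>)"]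
proof (intro conjI allI impI ballI)
  fix \<theta> :: real assume "pdm D 1 r A" "\<theta> \<in> {0..1}"
  then show "adj_mat (A \<theta>) \<in> carrier_mat r r" using adj_mat(1) pdm_carrier by blast
next
  fix i j assume a: "pdm D 1 r A" "i < r" "j < r"
  have "pd ((r - 1) * D) 1 (\<lambda>\<theta>. det (mat_delete (A \<theta>) j i))"
    by (rule pd_det, rule pdm_delete) (use a in auto)
  then have "pd ((r - 1) * D) 1 (\<lambda>\<theta>. (-1)^(j+i) * det (mat_delete (A \<theta>) j i))"
    by (rule pd_scale)
  then show "pd ((r - 1) * D) 1 (\<lambda>\<theta>. adj_mat (A \<theta>) $$ (i, j))"
  proof (rule pd_cong)
    fix \<theta> :: real assume "\<theta> \<in> {0..1}"
    then have "A \<theta> \<in> carrier_mat r r" using pdm_carrier[OF a(1)] by blast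
    then show "(-1)^(j+i) * det (mat_delete (A \<theta>) j i) = adj_mat (A \<theta>) $$ (i, j)"
      using a by (auto simp: adj_mat_def cofactor_def)
  qed
qed



lemma unitary_norm:
  assumes H: "H \<in> carrier_mat r r" and u: "adjoint H * H = 1\<^sub>m r" and v: "v \<in> carrier_vec r"
  shows "(\<Sum>i<r. cnj ((H *\<^sub>v v)$i) * (H *\<^sub>v v)$i) = (\<Sum>i<r. cnj (v$i) * v$i)"
proof -
  have e: "(\<Sum>i<r. cnj (H$$(i,k)) * H$$(i,l)) = (if k = l then 1 else 0)" if "k<r" "l<r" for k l
  proof -
    have "(adjoint H * H) $$ (k,l) = (\<Sum>i<r. cnj (H$$(i,k)) * H$$(i,l))"
      using H that by (auto simp: adjoint_def scalar_prod_def lessThan_atLeast0 intro!: sum.cong)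
    then show ?thesis using u that by simp
  qed
  have w: "(H *\<^sub>v v)$i = (\<Sum>k<r. H$$(i,k) * v$k)" if "i<r" for i
    using H v that by (auto simp: scalar_prod_def lessThan_atLeast0 intro!: sum.cong)
  have "(\<Sum>i<r. cnj ((H *\<^sub>v v)$i) * (H *\<^sub>v v)$i)
      = (\<Sum>i<r. (\<Sum>k<r. cnj (H$$(i,k)) * cnj (v$k)) * (\<Sum>l<r. H$$(i,l) * v$l))"
    by (rule sum.cong) (auto simp: w cnj_sum)
  also have "\<dots> = (\<Sum>i<r. \<Sum>k<r. \<Sum>l<r. cnj (v$k) * v$l * (cnj (H$$(i,k)) * H$$(i,l)))"
  proof (intro sum.cong refl)
    fix i
    show "(\<Sum>k<r. cnj (H$$(i,k)) * cnj (v$k)) * (\<Sum>l<r. H$$(i,l) * v$l) = (\<Sum>k<r. \<Sum>l<r. cnj (v$k) * v$l * (cnj (H$$(i,k)) * H$$(i,l)))"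
      unfolding sum_product by (intro sum.cong refl) (simp only: mult_ac)
  qed
  also have "\<dots> = (\<Sum>k<r. \<Sum>i<r. \<Sum>l<r. cnj (v$k) * v$l * (cnj (H$$(i,k)) * H$$(i,l)))"
    by (rule sum.swap)
  also have "\<dots> = (\<Sum>k<r. \<Sum>l<r. \<Sum>i<r. cnj (v$k) * v$l * (cnj (H$$(i,k)) * H$$(i,l)))"
    by (rule sum.cong[OF refl]) (rule sum.swap)
  also have "\<dots> = (\<Sum>k<r. \<Sum>l<r. cnj (v$k) * v$l * (if k = l then 1 else 0))"
  proof (intro sum.cong refl)
    fix k l assume "k \<in> {..<r}" "l \<in> {..<r}"
    then show "(\<Sum>i<r. cnj (v$k) * v$l * (cnj (H$$(i,k)) * H$$(i,l))) = cnj (v$k) * v$l * (if k = l then 1 else 0)"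
      using e[of k l] by (simp only: flip: sum_distrib_left) simp
  qed
  also have "\<dots> = (\<Sum>k<r. cnj (v$k) * v$k)"
  proof (intro sum.cong refl)
    fix k assume k: "k \<in> {..<r}"
    have "(\<Sum>l<r. cnj (v$k) * v$l * (if k = l then 1 else 0)) = (\<Sum>l<r. if k = l then cnj (v$k) * v$l else 0)"
      by (intro sum.cong refl) simp
    also have "\<dots> = cnj (v$k) * v$k" using k by (simp add: sum.delta)
    finally show "(\<Sum>l<r. cnj (v$k) * v$l * (if k = l then 1 else 0)) = cnj (v$k) * v$k" .
  qed
  finally show ?thesis .
qed


lemma det_denom_nonzero:
  assumes H: "H \<in> carrier_mat r r" and u: "adjoint H * H = 1\<^sub>m r" and d1: "det (1\<^sub>m r + H) \<noteq> 0"
    and \<theta>: "0 \<le> \<theta>" "\<theta> \<le> 1"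
  shows "det ((2 - complex_of_real \<theta>) \<cdot>\<^sub>m 1\<^sub>m r + complex_of_real \<theta> \<cdot>\<^sub>m H) \<noteq> 0"
proof
  define t where "t = complex_of_real \<theta>"
  define M where "M = (2 - t) \<cdot>\<^sub>m 1\<^sub>m r + t \<cdot>\<^sub>m H"
  have M: "M \<in> carrier_mat r r" using H by (simp add: M_def)
  assume "det ((2 - complex_of_real \<theta>) \<cdot>\<^sub>m 1\<^sub>m r + complex_of_real \<theta> \<cdot>\<^sub>m H) = 0"
  then have "det M = 0" by (simp add: M_def t_def)
  then obtain v where v: "v \<in> carrier_vec r" "v \<noteq> 0\<^sub>v r" "M *\<^sub>v v = 0\<^sub>v r"
    using det_0_iff_vec_prod_zero[OF M] by blast
  show False
  proof (cases "\<theta> = 1")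
    case True
    have "M = 1\<^sub>m r + H"
      by (rule eq_matI) (use H in \<open>auto simp: M_def t_def True\<close>)
    then show False using d1 \<open>det M = 0\<close> by simp
  next
    case False
    define w where "w = H *\<^sub>v v"
    have wi: "w$i = (\<Sum>k<r. H$$(i,k) * v$k)" if "i<r" for i
      using H v that by (auto simp: w_def scalar_prod_def lessThan_atLeast0 intro!: sum.cong)
    have comp: "t * w$i = - (2 - t) * v$i" if i: "i<r" for i
    proof -
      have "(M *\<^sub>v v)$i = (\<Sum>k<r. M$$(i,k) * v$k)"
        using M v(1) i by (auto simp: scalar_prod_def lessThan_atLeast0 intro!: sum.cong)
      also have "\<dots> = (\<Sum>k<r. (if i = k then (2 - t) * v$k else 0) + t * (H$$(i,k) * v$k))"
        using H i by (intro sum.cong refl) (auto simp: M_def algebra_simps)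
      also have "\<dots> = (2 - t) * v$i + t * w$i"
        using i by (simp add: sum.distrib sum.delta wi sum_distrib_left)
      finally have "(2 - t) * v$i + t * w$i = 0" using v(3) i by simp
      then show ?thesis by (simp add: algebra_simps add_eq_0_iff)
    qed
    have t_real: "cnj t = t" by (simp add: t_def)
    have sq: "t^2 * (cnj (w$i) * w$i) = (2 - t)^2 * (cnj (v$i) * v$i)" if "i<r" for i
    proof -
      have "cnj (t * w$i) * (t * w$i) = cnj (- (2 - t) * v$i) * (- (2 - t) * v$i)" using comp[OF that] by simp
      then show ?thesis by (simp add: t_real power2_eq_square algebra_simps)
    qed
    have "t^2 * (\<Sum>i<r. cnj (w$i) * w$i) = (2 - t)^2 * (\<Sum>i<r. cnj (v$i) * v$i)"
      by (simp add: sum_distrib_left sq)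
    moreover have "(\<Sum>i<r. cnj (w$i) * w$i) = (\<Sum>i<r. cnj (v$i) * v$i)"
      unfolding w_def by (rule unitary_norm[OF H u v(1)])
    ultimately have "(t^2 - (2 - t)^2) * (\<Sum>i<r. cnj (v$i) * v$i) = 0"
      by (simp add: algebra_simps)
    moreover have "t^2 - (2 - t)^2 \<noteq> 0"
    proof
      assume "t^2 - (2 - t)^2 = 0"
      then have "4 * t - 4 = 0" by (simp add: power2_eq_square algebra_simps)
      then have "t = 1" by simp
      then show False using False by (simp add: t_def)
    qed
    ultimately have N0: "(\<Sum>i<r. cnj (v$i) * v$i) = 0" by simp
    have "(\<Sum>i<r. cnj (v$i) * v$i) = complex_of_real (\<Sum>i<r. (cmod (v$i))^2)"
      unfolding of_real_sum
    proof (intro sum.cong refl)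
      fix i
      show "cnj (v$i) * v$i = complex_of_real ((cmod (v$i))^2)"
        using complex_norm_square[of "v$i"] by (simp add: mult.commute)
    qed
    with N0 have "complex_of_real (\<Sum>i<r. (cmod (v$i))^2) = 0" by simp
    then have "(\<Sum>i<r. (cmod (v$i))^2) = 0" by (simp only: of_real_eq_0_iff)
    then have "\<forall>i\<in>{..<r}. (cmod (v$i))^2 = 0"
      by (subst sum_nonneg_eq_0_iff[symmetric]) auto
    then have "v = 0\<^sub>v r" using v(1) by (intro eq_vecI) auto
    then show False using v(2) by simp
  qed
qed



lemma pd_lin: "pd 1 1 (\<lambda>\<theta>. a + b * complex_of_real \<theta>)"
  unfolding pd_def by (intro exI[of _ "[:a,b:]"]) (auto simp: algebra_simps)

lemma pdm_lin: assumes "X \<in> carrier_mat r r" "Y \<in> carrier_mat r r"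
  shows "pdm 1 1 r (\<lambda>\<theta>. (a + b * complex_of_real \<theta>) \<cdot>\<^sub>m X + (c + d * complex_of_real \<theta>) \<cdot>\<^sub>m Y)"
proof -
  have "pdm (1+0) (1*1) r (\<lambda>\<theta>. (a + b * complex_of_real \<theta>) \<cdot>\<^sub>m X)"
    by (rule pdm_smult[OF pd_lin pdm_const[OF assms(1)]])
  moreover have "pdm (1+0) (1*1) r (\<lambda>\<theta>. (c + d * complex_of_real \<theta>) \<cdot>\<^sub>m Y)"
    by (rule pdm_smult[OF pd_lin pdm_const[OF assms(2)]])
  ultimately show ?thesis using pdm_add by fastforce
qed

lemma gate_pd:
  assumes G: "G \<in> carrier_mat r r" and H: "unitary r H" and d1: "det (1\<^sub>m r + H) \<noteq> 0"
    and R: "r \<le> R" "1 \<le> R"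
  shows "\<exists>\<Delta>. degree \<Delta> \<le> R \<and> (\<forall>\<theta>\<in>{0..1}. poly \<Delta> (complex_of_real \<theta>) \<noteq> 0) \<and>
     pdm R \<Delta> r (\<lambda>\<theta>. cayley \<theta> H * G)"
proof -
  have Hc: "H \<in> carrier_mat r r" and u: "adjoint H * H = 1\<^sub>m r" using H by (auto simp: unitary_def)
  define Dm where "Dm = (\<lambda>\<theta>. (2 - complex_of_real \<theta>) \<cdot>\<^sub>m 1\<^sub>m r + complex_of_real \<theta> \<cdot>\<^sub>m H)"
  define Am where "Am = (\<lambda>\<theta>. complex_of_real \<theta> \<cdot>\<^sub>m 1\<^sub>m r + (2 - complex_of_real \<theta>) \<cdot>\<^sub>m H)"
  have pD: "pdm 1 1 r Dm"
    using pdm_lin[OF one_carrier_mat Hc, of 2 "-1" 0 1] unfolding Dm_def by simp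
  have pA: "pdm 1 1 r Am"
    using pdm_lin[OF one_carrier_mat Hc, of 0 1 2 "-1"] unfolding Am_def by simp
  have "pd (r*1) 1 (\<lambda>\<theta>. det (Dm \<theta>))" by (rule pd_det[OF pD])
  then obtain p where p: "degree p \<le> r" "\<And>\<theta>. \<theta>\<in>{0..1} \<Longrightarrow> det (Dm \<theta>) = poly p (complex_of_real \<theta>)"
    unfolding pd_def by auto
  have nz: "poly p (complex_of_real \<theta>) \<noteq> 0" if "\<theta>\<in>{0..1}" for \<theta>
    using det_denom_nonzero[OF Hc u d1, of \<theta>] that p(2)[OF that] by (simp add: Dm_def)
  have pinv: "pd 0 p (\<lambda>\<theta>. 1 / det (Dm \<theta>))"
    by (rule pd_inv) (use p(2) nz in auto)
  have padj: "pdm ((r - 1) * 1) 1 r (\<lambda>\<theta>. adj_mat (Dm \<theta>))" by (rule pdm_adj[OF pD])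
  have "pdm (0 + (r - 1) * 1) (p * 1) r (\<lambda>\<theta>. (1 / det (Dm \<theta>)) \<cdot>\<^sub>m adj_mat (Dm \<theta>))"
    by (rule pdm_smult[OF pinv padj])
  then have pminv: "pdm (r - 1) p r (\<lambda>\<theta>. minv (Dm \<theta>))" by (simp add: minv_def)
  have "pdm (1 + (r - 1)) (1 * p) r (\<lambda>\<theta>. Am \<theta> * minv (Dm \<theta>))" by (rule pdm_mult[OF pA pminv])
  then have "pdm (1 + (r - 1)) p r (\<lambda>\<theta>. Am \<theta> * minv (Dm \<theta>))" by simp
  then have "pdm (1 + (r - 1)) p r (\<lambda>\<theta>. cayley \<theta> H)"
    by (rule pdm_cong) (use Hc in \<open>auto simp: cayley_def Let_def Am_def Dm_def\<close>)
  from pdm_mult[OF this pdm_const[OF G]]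
  have "pdm (1 + (r - 1) + 0) (p * 1) r (\<lambda>\<theta>. cayley \<theta> H * G)" .
  then have "pdm (1 + (r - 1) + 0) p r (\<lambda>\<theta>. cayley \<theta> H * G)" by simp
  then have "pdm R p r (\<lambda>\<theta>. cayley \<theta> H * G)" by (rule pdm_mono) (use R in auto)
  moreover have "degree p \<le> R" using p(1) R by simp
  ultimately show ?thesis using nz by blast
qed



lemma map_poly_cnj_one: "map_poly cnj (1::complex poly) = 1"
  by (rule poly_eqI) (simp add: coeff_map_poly coeff_1)

lemma pdm_foldr:
  assumes K: "\<forall>K\<in>set Ks. K \<in> carrier_mat (2 ^ length qs) (2 ^ length qs)" and \<rho>: "pdm D S (2 ^ n) \<rho>"
  shows "pdm D S (2 ^ n) (\<lambda>\<theta>. foldr (\<lambda>K acc. embed n qs K * \<rho> \<theta> * adjoint (embed n qs K) + acc) Ks (0\<^sub>m (2 ^ n) (2 ^ n)))"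
  using K
proof (induction Ks)
  case Nil
  then show ?case using pdm_zero by simp
next
  case (Cons K Ks)
  have e: "pdm 0 1 (2 ^ n) (\<lambda>\<theta>. embed n qs K)"
    by (rule pdm_embed, rule pdm_const) (use Cons in auto)
  have "pdm (0 + D + 0) (1 * S * map_poly cnj 1) (2 ^ n) (\<lambda>\<theta>. embed n qs K * \<rho> \<theta> * adjoint (embed n qs K))"
    by (rule pdm_mult[OF pdm_mult[OF e \<rho>] pdm_adjoint[OF e]])
  then have "pdm D S (2 ^ n) (\<lambda>\<theta>. embed n qs K * \<rho> \<theta> * adjoint (embed n qs K))"
    by (simp add: map_poly_cnj_one)
  from pdm_add[OF this Cons.IH] Cons.prems show ?case by simp
qed

lemma pdm_channel:
  assumes ch: "valid_channel n ch" and \<rho>: "pdm D S (2 ^ n) \<rho>"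
  shows "pdm D S (2 ^ n) (\<lambda>\<theta>. apply_channel n \<gamma> ch (\<rho> \<theta>))"
proof -
  have K: "\<forall>K\<in>set (snd ch). K \<in> carrier_mat (2 ^ length (fst ch)) (2 ^ length (fst ch))"
    using ch by (auto simp: valid_channel_def Let_def)
  have f: "pdm D S (2 ^ n) (\<lambda>\<theta>. foldr (\<lambda>K acc. embed n (fst ch) K * \<rho> \<theta> * adjoint (embed n (fst ch) K) + acc) (snd ch) (0\<^sub>m (2 ^ n) (2 ^ n)))"
    by (rule pdm_foldr[OF K \<rho>])
  have a: "pdm (0 + D) (1 * S) (2 ^ n) (\<lambda>\<theta>. complex_of_real (1 - \<gamma>) \<cdot>\<^sub>m \<rho> \<theta>)"
    by (rule pdm_smult[OF pd_const \<rho>])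
  have b: "pdm (0 + D) (1 * S) (2 ^ n) (\<lambda>\<theta>. complex_of_real \<gamma> \<cdot>\<^sub>m foldr (\<lambda>K acc. embed n (fst ch) K * \<rho> \<theta> * adjoint (embed n (fst ch) K) + acc) (snd ch) (0\<^sub>m (2 ^ n) (2 ^ n)))"
    by (rule pdm_smult[OF pd_const f])
  from pdm_add[OF a b] show ?thesis by (simp add: apply_channel_def)
qed

lemma pdm_layer:
  assumes "\<forall>ch\<in>set L. valid_channel n ch" and "pdm D S (2 ^ n) \<rho>"
  shows "pdm D S (2 ^ n) (\<lambda>\<theta>. apply_layer n \<gamma> L (\<rho> \<theta>))"
  using assms
proof (induction L arbitrary: \<rho>)
  case Nil
  then show ?case by (simp add: apply_layer_def)
next
  case (Cons ch L)
  have "pdm D S (2 ^ n) (\<lambda>\<theta>. apply_channel n \<gamma> ch (\<rho> \<theta>))"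
    by (rule pdm_channel) (use Cons in auto)
  then have "pdm D S (2 ^ n) (\<lambda>\<theta>. apply_layer n \<gamma> L (apply_channel n \<gamma> ch (\<rho> \<theta>)))"
    using Cons by auto
  then show ?case by (simp add: apply_layer_def)
qed

lemma pdm_unitary:
  assumes U: "pdm R \<Delta> (2 ^ length qs) U" and \<rho>: "pdm D S (2 ^ n) \<rho>"
  shows "pdm (R + D + R) (\<Delta> * S * map_poly cnj \<Delta>) (2 ^ n) (\<lambda>\<theta>. apply_unitary n qs (U \<theta>) (\<rho> \<theta>))"
proof -
  have e: "pdm R \<Delta> (2 ^ n) (\<lambda>\<theta>. embed n qs (U \<theta>))" by (rule pdm_embed[OF U])
  show ?thesis unfolding apply_unitary_def
    by (rule pdm_mult[OF pdm_mult[OF e \<rho>] pdm_adjoint[OF e]])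
qed

lemma pdm_fold:
  assumes U: "\<forall>i<m. pdm R (\<Delta> i) (2 ^ length (qs i)) (U i)"
    and N: "\<forall>i<m. \<forall>ch\<in>set (N i). valid_channel n ch"
    and \<rho>0: "pdm D0 S0 (2 ^ n) \<rho>0"
    and j: "j \<le> m"
  shows "pdm (D0 + 2 * R * j) (S0 * (\<Prod>i<j. \<Delta> i * map_poly cnj (\<Delta> i))) (2 ^ n)
     (\<lambda>\<theta>. fold (\<lambda>i \<rho>. apply_layer n \<gamma> (N i) (apply_unitary n (qs i) (U i \<theta>) \<rho>)) [0..<j] (\<rho>0 \<theta>))"
  using j
proof (induction j)
  case 0
  then show ?case using \<rho>0 by simp
next
  case (Suc j)
  let ?F = "\<lambda>\<theta>. fold (\<lambda>i \<rho>. apply_layer n \<gamma> (N i) (apply_unitary n (qs i) (U i \<theta>) \<rho>)) [0..<j] (\<rho>0 \<theta>)"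
  have IH: "pdm (D0 + 2 * R * j) (S0 * (\<Prod>i<j. \<Delta> i * map_poly cnj (\<Delta> i))) (2 ^ n) ?F"
    using Suc by simp
  have u: "pdm (R + (D0 + 2 * R * j) + R) (\<Delta> j * (S0 * (\<Prod>i<j. \<Delta> i * map_poly cnj (\<Delta> i))) * map_poly cnj (\<Delta> j)) (2 ^ n)
      (\<lambda>\<theta>. apply_unitary n (qs j) (U j \<theta>) (?F \<theta>))"
    by (rule pdm_unitary[OF _ IH]) (use U Suc.prems in auto)
  have "pdm (R + (D0 + 2 * R * j) + R) (\<Delta> j * (S0 * (\<Prod>i<j. \<Delta> i * map_poly cnj (\<Delta> i))) * map_poly cnj (\<Delta> j)) (2 ^ n)
      (\<lambda>\<theta>. apply_layer n \<gamma> (N j) (apply_unitary n (qs j) (U j \<theta>) (?F \<theta>)))"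
    by (rule pdm_layer[OF _ u]) (use N Suc.prems in \<open>simp add: Suc_le_eq\<close>)
  moreover have "R + (D0 + 2 * R * j) + R = D0 + 2 * R * Suc j" by simp
  moreover have "\<Delta> j * (S0 * (\<Prod>i<j. \<Delta> i * map_poly cnj (\<Delta> i))) * map_poly cnj (\<Delta> j)
      = S0 * (\<Prod>i<Suc j. \<Delta> i * map_poly cnj (\<Delta> i))" by (simp add: mult_ac)
  ultimately show ?case by simp
qed



lemma main_bound:
  fixes k n :: nat and gs :: "gate list" and Hs :: "complex mat list" and \<gamma> :: real and N :: "channel list list"
  assumes gsv: "\<forall>g\<in>set gs. valid_gate n g \<and> length (fst g) \<le> k"
    and len: "length Hs = length gs"
    and Hv: "\<forall>i<length gs. unitary (2 ^ length (fst (gs ! i))) (Hs ! i) \<and>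
                   det (1\<^sub>m (2 ^ length (fst (gs ! i))) + Hs ! i) \<noteq> 0"
    and Nv: "valid_noise_model n (length gs) \<gamma> N"
  shows "\<exists>P Q :: complex poly.
          degree P \<le> 2 * 2 ^ k * length gs \<and> degree Q \<le> 2 * 2 ^ k * length gs \<and>
          (\<forall>\<theta>\<in>{0..1::real}. poly Q (complex_of_real \<theta>) \<noteq> 0 \<and>
             p0 n (circuit_theta gs Hs \<theta>) \<gamma> N
               = poly P (complex_of_real \<theta>) / poly Q (complex_of_real \<theta>))"
proof -
  define m where "m = length gs"
  define R where "R = (2::nat) ^ k"
  have ex: "\<exists>\<Delta>. degree \<Delta> \<le> R \<and> (\<forall>\<theta>\<in>{0..1}. poly \<Delta> (complex_of_real \<theta>) \<noteq> 0) \<and>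
     pdm R \<Delta> (2 ^ length (fst (gs ! i))) (\<lambda>\<theta>. cayley \<theta> (Hs ! i) * snd (gs ! i))" if i: "i < m" for i
  proof (rule gate_pd)
    have g: "gs ! i \<in> set gs" using i by (simp add: m_def)
    then show "snd (gs ! i) \<in> carrier_mat (2 ^ length (fst (gs ! i))) (2 ^ length (fst (gs ! i)))"
      using gsv by (auto simp: valid_gate_def unitary_def)
    show "unitary (2 ^ length (fst (gs ! i))) (Hs ! i)" using Hv i by (simp add: m_def)
    show "det (1\<^sub>m (2 ^ length (fst (gs ! i))) + Hs ! i) \<noteq> 0" using Hv i by (simp add: m_def)
    show "2 ^ length (fst (gs ! i)) \<le> R" unfolding R_def
      by (rule power_increasing) (use g gsv in auto)
    show "1 \<le> R" by (simp add: R_def)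
  qed
  obtain \<Delta> where \<Delta>: "\<And>i. i < m \<Longrightarrow> degree (\<Delta> i) \<le> R \<and> (\<forall>\<theta>\<in>{0..1}. poly (\<Delta> i) (complex_of_real \<theta>) \<noteq> 0) \<and>
     pdm R (\<Delta> i) (2 ^ length (fst (gs ! i))) (\<lambda>\<theta>. cayley \<theta> (Hs ! i) * snd (gs ! i))"
    using ex by metis
  have lenN: "length N = Suc m" and chv: "\<forall>L\<in>set N. \<forall>ch\<in>set L. valid_channel n ch"
    using Nv by (auto simp: valid_noise_model_def m_def)
  have p0c: "proj0 n \<in> carrier_mat (2 ^ n) (2 ^ n)" by (simp add: proj0_def)
  have \<rho>0: "pdm 0 1 (2 ^ n) (\<lambda>\<theta>. apply_layer n \<gamma> (N ! 0) (proj0 n))"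
    by (rule pdm_layer[OF _ pdm_const[OF p0c]]) (use lenN chv in auto)
  define Q where "Q = (\<Prod>i<m. \<Delta> i * map_poly cnj (\<Delta> i))"
  have "pdm (0 + 2 * R * m) (1 * Q) (2 ^ n)
     (\<lambda>\<theta>. fold (\<lambda>i \<rho>. apply_layer n \<gamma> (N ! Suc i) (apply_unitary n (fst (gs ! i)) (cayley \<theta> (Hs ! i) * snd (gs ! i)) \<rho>)) [0..<m]
        (apply_layer n \<gamma> (N ! 0) (proj0 n)))"
    unfolding Q_def
    by (rule pdm_fold[where U="\<lambda>i \<theta>. cayley \<theta> (Hs ! i) * snd (gs ! i)" and N="\<lambda>i. N ! Suc i" and m=m and j=m and R=R and qs="\<lambda>i. fst (gs ! i)", OF _ _ \<rho>0])
       (use \<Delta> lenN chv in auto)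
  then have fo: "pdm (2 * R * m) Q (2 ^ n)
     (\<lambda>\<theta>. fold (\<lambda>i \<rho>. apply_layer n \<gamma> (N ! Suc i) (apply_unitary n (fst (gs ! i)) (cayley \<theta> (Hs ! i) * snd (gs ! i)) \<rho>)) [0..<m]
        (apply_layer n \<gamma> (N ! 0) (proj0 n)))" by simp
  have "pdm (2 * R * m) Q (2 ^ n) (\<lambda>\<theta>. noisy_output n (circuit_theta gs Hs \<theta>) \<gamma> N)"
  proof (rule pdm_cong[OF fo])
    fix \<theta> :: real
    show "fold (\<lambda>i \<rho>. apply_layer n \<gamma> (N ! Suc i) (apply_unitary n (fst (gs ! i)) (cayley \<theta> (Hs ! i) * snd (gs ! i)) \<rho>)) [0..<m]
        (apply_layer n \<gamma> (N ! 0) (proj0 n)) = noisy_output n (circuit_theta gs Hs \<theta>) \<gamma> N"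
      unfolding noisy_output_def
      by (rule fold_cong) (auto simp: circuit_theta_def m_def)
  qed
  from pdm_mult[OF pdm_const[OF p0c] this]
  have pm: "pdm (0 + 2 * R * m) (1 * Q) (2 ^ n) (\<lambda>\<theta>. proj0 n * noisy_output n (circuit_theta gs Hs \<theta>) \<gamma> N)" .
  have "pd (2 * R * m) Q (\<lambda>\<theta>. \<Sum>i\<in>{..<2 ^ n}. (proj0 n * noisy_output n (circuit_theta gs Hs \<theta>) \<gamma> N) $$ (i, i))"
    by (rule pd_sum) (use pdm_entry[OF pm] in auto)
  then have "pd (2 * R * m) Q (\<lambda>\<theta>. p0 n (circuit_theta gs Hs \<theta>) \<gamma> N)"
  proof (rule pd_cong)
    fix \<theta> :: real assume "\<theta> \<in> {0..1}"
    then have "proj0 n * noisy_output n (circuit_theta gs Hs \<theta>) \<gamma> N \<in> carrier_mat (2 ^ n) (2 ^ n)"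
      using pdm_carrier[OF pm] by simp
    then show "(\<Sum>i\<in>{..<2 ^ n}. (proj0 n * noisy_output n (circuit_theta gs Hs \<theta>) \<gamma> N) $$ (i, i)) = p0 n (circuit_theta gs Hs \<theta>) \<gamma> N"
      by (simp add: p0_def mtrace_def proj0_def)
  qed
  then obtain P where P: "degree P \<le> 2 * R * m"
    "\<And>\<theta>. \<theta> \<in> {0..1} \<Longrightarrow> poly Q (complex_of_real \<theta>) * p0 n (circuit_theta gs Hs \<theta>) \<gamma> N = poly P (complex_of_real \<theta>)"
    unfolding pd_def by blast
  have Qnz: "poly Q (complex_of_real \<theta>) \<noteq> 0" if "\<theta> \<in> {0..1}" for \<theta>
    using \<Delta> that by (auto simp: Q_def poly_prod poly_cnj_of_real)
  have "degree Q \<le> (\<Sum>i<m. degree (\<Delta> i * map_poly cnj (\<Delta> i)))"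
    unfolding Q_def using degree_prod_sum_le[of "{..<m}" "\<lambda>i. \<Delta> i * map_poly cnj (\<Delta> i)"] by (simp add: o_def)
  also have "\<dots> \<le> (\<Sum>i<m. 2 * R)"
  proof (rule sum_mono)
    fix i assume "i \<in> {..<m}"
    then have "degree (\<Delta> i) \<le> R" using \<Delta> by auto
    moreover have "degree (map_poly cnj (\<Delta> i)) \<le> degree (\<Delta> i)" by (rule map_poly_degree_leq)
    ultimately show "degree (\<Delta> i * map_poly cnj (\<Delta> i)) \<le> 2 * R"
      using degree_mult_le[of "\<Delta> i" "map_poly cnj (\<Delta> i)"] by linarith
  qed
  also have "\<dots> = 2 * R * m" by simp
  finally have dQ: "degree Q \<le> 2 * R * m" .
  show ?thesis
  proof (intro exI conjI ballI)
    show "degree P \<le> 2 * 2 ^ k * length gs" using P(1) by (simp add: R_def m_def)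
    show "degree Q \<le> 2 * 2 ^ k * length gs" using dQ by (simp add: R_def m_def)
    fix \<theta> :: real assume t: "\<theta> \<in> {0..1}"
    show "poly Q (complex_of_real \<theta>) \<noteq> 0" by (rule Qnz[OF t])
    show "p0 n (circuit_theta gs Hs \<theta>) \<gamma> N = poly P (complex_of_real \<theta>) / poly Q (complex_of_real \<theta>)"
      using P(2)[OF t] Qnz[OF t] by (simp add: field_simps)
  qed
qed

theorem lemma3:
  fixes k :: nat
  shows "\<exists>c::nat. \<forall>(n::nat) (gs::gate list) (Hs::complex mat list) (\<gamma>::real) (N::channel list list).
    (\<forall>g\<in>set gs. valid_gate n g \<and> length (fst g) \<le> k) \<and>
    length Hs = length gs \<and>
    (\<forall>i<length gs. unitary (2 ^ length (fst (gs ! i))) (Hs ! i) \<and>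
                   det (1\<^sub>m (2 ^ length (fst (gs ! i))) + Hs ! i) \<noteq> 0) \<and>
    valid_noise_model n (length gs) \<gamma> N
    \<longrightarrow> (\<exists>P Q :: complex poly.
          degree P \<le> c * length gs \<and> degree Q \<le> c * length gs \<and>
          (\<forall>\<theta>\<in>{0..1::real}. poly Q (complex_of_real \<theta>) \<noteq> 0 \<and>
             p0 n (circuit_theta gs Hs \<theta>) \<gamma> N
               = poly P (complex_of_real \<theta>) / poly Q (complex_of_real \<theta>)))"
  by (intro exI[of _ "2 * 2 ^ k :: nat"] allI impI, elim conjE, rule main_bound)

end
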